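(* There is an absolute constant $C$ such that the following holds. Let $\alpha$ and $\beta$ be two discrete random variables defined on the same finite probability space. Then there exists a random variable $\gamma$ defined on the same probability space such that $H(\alpha\mid\beta,\gamma)=0$ and $H(\gamma)\le 2H(\alpha\mid\beta)+C$.
   Context: $H$ denotes Shannon entropy (logarithms base $2$) and $H(\cdot\mid\cdot)$ conditional Shannon entropy. The probability space is finite and every non-empty event has positive probability. In the paper the bound is written $H(\gamma)\le 2H(\alpha\mid\beta)+O(1)$, the $O(1)$ being a constant independent of $\alpha,\beta$. *)

theory Defs
  imports "HOL-Probability.Probability"
begin

text \<open>A finite probability space is modelled as a probability mass function p on nat
  with finite support; the sample space is set_pmf p, so every non-empty event
  (subset of the support) has positive probability.\<close>

definition shannon_entropy :: "nat pmf \<Rightarrow> (nat \<Rightarrow> 'a) \<Rightarrow> real" where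
  "shannon_entropy p X =
     - (\<Sum>x \<in> X ` set_pmf p. pmf (map_pmf X p) x * log 2 (pmf (map_pmf X p) x))"

definition cond_shannon_entropy :: "nat pmf \<Rightarrow> (nat \<Rightarrow> 'a) \<Rightarrow> (nat \<Rightarrow> 'b) \<Rightarrow> real" where
  "cond_shannon_entropy p X Y =
     (\<Sum>y \<in> Y ` set_pmf p. pmf (map_pmf Y p) y *
        shannon_entropy (cond_pmf p {\<omega>. Y \<omega> = y}) X)"

end

theory Submission imports Defs begin

definition PX :: "nat pmf \<Rightarrow> (nat \<Rightarrow> 'a) \<Rightarrow> 'a \<Rightarrow> real" where
  "PX q X x = sum (pmf q) {\<omega>\<in>set_pmf q. X \<omega> = x}"

lemma L0:
  assumes "finite (set_pmf q)"
  shows "pmf (map_pmf X q) x = PX q X x"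
proof -
  have "pmf (map_pmf X q) x = measure q (X -` {x} \<inter> set_pmf q)"
    by (simp add: pmf_map measure_Int_set_pmf)
  also have "\<dots> = sum (pmf q) (X -` {x} \<inter> set_pmf q)"
    using assms by (simp add: measure_measure_pmf_finite)
  also have "X -` {x} \<inter> set_pmf q = {\<omega>\<in>set_pmf q. X \<omega> = x}" by auto
  finally show ?thesis by (simp add: PX_def)
qed

lemma G:
  assumes "finite (set_pmf q)"
  shows "(\<Sum>x\<in>X ` set_pmf q. PX q X x * g x) = (\<Sum>\<omega>\<in>set_pmf q. pmf q \<omega> * g (X \<omega>))"
proof -
  have "(\<Sum>\<omega>\<in>set_pmf q. pmf q \<omega> * g (X \<omega>)) =
     (\<Sum>x\<in>X ` set_pmf q. \<Sum>\<omega>\<in>{\<omega>. \<omega> \<in> set_pmf q \<and> X \<omega> = x}. pmf q \<omega> * g (X \<omega>))"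
    by (rule sum.image_gen[OF assms])
  also have "\<dots> = (\<Sum>x\<in>X ` set_pmf q. PX q X x * g x)"
    unfolding PX_def sum_distrib_right by (intro sum.cong refl) auto
  finally show ?thesis by simp
qed

lemma PX_pos:
  assumes "finite (set_pmf q)" "\<omega> \<in> set_pmf q"
  shows "PX q X (X \<omega>) > 0"
proof -
  have "pmf q \<omega> \<le> PX q X (X \<omega>)" unfolding PX_def
    using assms by (intro member_le_sum) auto
  moreover have "pmf q \<omega> > 0" using assms by (simp add: pmf_positive)
  ultimately show ?thesis by linarith
qed

lemma E:
  assumes "finite (set_pmf q)"
  shows "shannon_entropy q X = (\<Sum>\<omega>\<in>set_pmf q. pmf q \<omega> * - log 2 (PX q X (X \<omega>)))"
  unfolding shannon_entropy_def L0[OF assms] 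
  using G[OF assms, of X "\<lambda>x. - log 2 (PX q X x)"]
  by (simp add: sum_negf)

lemma CE:
  assumes fin: "finite (set_pmf p)"
  shows "cond_shannon_entropy p X Y = (\<Sum>\<omega>\<in>set_pmf p. pmf p \<omega> *
           - log 2 (PX p (\<lambda>\<omega>. (X \<omega>, Y \<omega>)) (X \<omega>, Y \<omega>) / PX p Y (Y \<omega>)))"
proof -
  let ?S = "set_pmf p"
  let ?g = "\<lambda>\<omega>. - log 2 (PX p (\<lambda>\<omega>. (X \<omega>, Y \<omega>)) (X \<omega>, Y \<omega>) / PX p Y (Y \<omega>))"
  have inner: "shannon_entropy (cond_pmf p {\<omega>. Y \<omega> = y}) X = 
     (\<Sum>\<omega>\<in>{\<omega>\<in>?S. Y \<omega> = y}. pmf p \<omega> / PX p Y y * ?g \<omega>)" if y: "y \<in> Y ` ?S" for y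
  proof -
    let ?A = "{\<omega>. Y \<omega> = y}"
    let ?q = "cond_pmf p ?A"
    have ne: "set_pmf p \<inter> ?A \<noteq> {}" using y by auto
    have sq: "set_pmf ?q = {\<omega>\<in>?S. Y \<omega> = y}" using ne by (auto simp: set_cond_pmf)
    have finq: "finite (set_pmf ?q)" using sq fin by simp
    have m: "measure p ?A = PX p Y y"
    proof -
      have "measure p ?A = measure p (?A \<inter> ?S)" by (simp add: measure_Int_set_pmf)
      also have "\<dots> = sum (pmf p) (?A \<inter> ?S)" using fin by (simp add: measure_measure_pmf_finite)
      also have "?A \<inter> ?S = {\<omega>\<in>?S. Y \<omega> = y}" by auto
      finally show ?thesis unfolding PX_def .
    qed
    have pq: "pmf ?q \<omega> = pmf p \<omega> / PX p Y y" if "\<omega> \<in> ?A" for \<omega>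
      using pmf_cond[OF ne] that m by simp
    have PXq: "PX ?q X (X \<omega>) = PX p (\<lambda>\<omega>. (X \<omega>, Y \<omega>)) (X \<omega>, Y \<omega>) / PX p Y (Y \<omega>)"
      if "\<omega> \<in> {\<omega>\<in>?S. Y \<omega> = y}" for \<omega>
    proof -
      have "PX ?q X (X \<omega>) = sum (pmf ?q) {\<omega>'\<in>?S. Y \<omega>' = y \<and> X \<omega>' = X \<omega>}"
        unfolding PX_def sq by (intro sum.cong) auto
      also have "\<dots> = sum (\<lambda>\<omega>'. pmf p \<omega>' / PX p Y y) {\<omega>'\<in>?S. Y \<omega>' = y \<and> X \<omega>' = X \<omega>}"
        by (intro sum.cong refl) (simp add: pq)
      also have "\<dots> = PX p (\<lambda>\<omega>. (X \<omega>, Y \<omega>)) (X \<omega>, Y \<omega>) / PX p Y (Y \<omega>)"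
        unfolding PX_def sum_divide_distrib[symmetric] using that
        by (intro arg_cong2[where f="(/)"] sum.cong) auto
      finally show ?thesis .
    qed
    show ?thesis unfolding E[OF finq] sq
      by (intro sum.cong refl) (simp add: pq PXq)
  qed
  have "cond_shannon_entropy p X Y = (\<Sum>y\<in>Y ` ?S. PX p Y y * 
       (\<Sum>\<omega>\<in>{\<omega>\<in>?S. Y \<omega> = y}. pmf p \<omega> / PX p Y y * ?g \<omega>))"
    unfolding cond_shannon_entropy_def L0[OF fin] by (intro sum.cong refl) (simp add: inner)
  also have "\<dots> = (\<Sum>y\<in>Y ` ?S. (\<Sum>\<omega>\<in>{\<omega>. \<omega> \<in> ?S \<and> Y \<omega> = y}. pmf p \<omega> * ?g \<omega>))"
  proof (intro sum.cong refl)
    fix y assume "y \<in> Y ` ?S"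
    then obtain \<omega>0 where "\<omega>0 \<in> ?S" "Y \<omega>0 = y" by auto
    then have "PX p Y y > 0" using PX_pos[OF fin, of \<omega>0 Y] by simp
    then show "PX p Y y * (\<Sum>\<omega>\<in>{\<omega>\<in>?S. Y \<omega> = y}. pmf p \<omega> / PX p Y y * ?g \<omega>) =
        (\<Sum>\<omega>\<in>{\<omega>. \<omega> \<in> ?S \<and> Y \<omega> = y}. pmf p \<omega> * ?g \<omega>)"
      by (simp add: sum_distrib_left)
  qed
  also have "\<dots> = (\<Sum>\<omega>\<in>?S. pmf p \<omega> * ?g \<omega>)"
    by (rule sum.image_gen[OF fin, symmetric])
  finally show ?thesis .
qed


lemma RK_inj:
  fixes f :: "nat \<Rightarrow> real"
  assumes "finite T" "a \<in> T" "a' \<in> T"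
    and "card {x\<in>T. f a < f x \<or> (f x = f a \<and> x \<le> a)} = card {x\<in>T. f a' < f x \<or> (f x = f a' \<and> x \<le> a')}"
  shows "a = a'"
proof (rule ccontr)
  assume ne: "a \<noteq> a'"
  define D where "D = (\<lambda>a. {x\<in>T. f a < f x \<or> (f x = f a \<and> x \<le> a)})"
  have key: "card (D u) < card (D v)" if "u \<in> T" "v \<in> T" "u \<noteq> v" "f v < f u \<or> (f u = f v \<and> u \<le> v)" for u v
  proof -
    have "D u \<subset> D v"
    proof
      show "D u \<subseteq> D v" using that unfolding D_def by auto
      have "v \<in> D v" using that unfolding D_def by auto
      moreover have "v \<notin> D u" using that unfolding D_def by auto
      ultimately show "D u \<noteq> D v" by blast
    qed
    then show ?thesis using assms(1) unfolding D_def by (intro psubset_card_mono) auto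
  qed
  have eq: "card (D a) = card (D a')" using assms(4) by (simp add: D_def)
  have "f a' < f a \<or> (f a = f a' \<and> a \<le> a') \<or> f a < f a' \<or> (f a' = f a \<and> a' \<le> a)" by linarith
  then have "card (D a) < card (D a') \<or> card (D a') < card (D a)"
  proof (elim disjE)
    assume h: "f a' < f a" show ?thesis using key[of a a'] h assms(2,3) ne by blast
  next
    assume h: "f a = f a' \<and> a \<le> a'" show ?thesis using key[of a a'] h assms(2,3) ne by blast
  next
    assume h: "f a < f a'" show ?thesis using key[of a' a] h assms(2,3) ne by blast
  next
    assume h: "f a' = f a \<and> a' \<le> a" show ?thesis using key[of a' a] h assms(2,3) ne by blast
  qed
  then show False using eq by simp
qed

lemma RK_bound:
  fixes f :: "nat \<Rightarrow> real"
  assumes "finite T" "a \<in> T" "\<And>x. x \<in> T \<Longrightarrow> f x \<ge> 0"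
  shows "real (card {x\<in>T. f a < f x \<or> (f x = f a \<and> x \<le> a)}) * f a \<le> sum f T"
    and "card {x\<in>T. f a < f x \<or> (f x = f a \<and> x \<le> a)} \<ge> 1"
proof -
  let ?D = "{x\<in>T. f a < f x \<or> (f x = f a \<and> x \<le> a)}"
  have "real (card ?D) * f a = (\<Sum>x\<in>?D. f a)" by simp
  also have "\<dots> \<le> sum f ?D" by (intro sum_mono) auto
  also have "\<dots> \<le> sum f T" using assms by (intro sum_mono2) auto
  finally show "real (card ?D) * f a \<le> sum f T" .
  have "a \<in> ?D" using assms by auto
  then show "card ?D \<ge> 1" using assms(1)
    by (metis (no_types, lifting) One_nat_def Suc_leI card_gt_0_iff empty_iff finite_subset mem_Collect_eq subsetI)
qed

lemma gibbs1:
  fixes P q :: real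
  assumes "P > 0" "q > 0"
  shows "- (P * log 2 P) \<le> P * - log 2 q + (q - P) / ln 2"
proof -
  have "log 2 q - log 2 P = ln (q / P) / ln 2"
    using assms by (simp add: log_def ln_div diff_divide_distrib)
  also have "\<dots> \<le> (q / P - 1) / ln 2"
    using assms by (intro divide_right_mono ln_le_minus_one) auto
  finally have "P * (log 2 q - log 2 P) \<le> P * ((q / P - 1) / ln 2)"
    using assms by (intro mult_left_mono) auto
  also have "\<dots> = (q - P) / ln 2" using assms by (simp add: field_simps)
  finally show ?thesis by (simp add: algebra_simps)
qed

lemma tele: "(\<Sum>r=1..N. 1 / (real r * (real r + 1))) = 1 - 1 / (real N + 1)"
proof (induction N)
  case 0 then show ?case by simp
next
  case (Suc N)
  have "(\<Sum>r=1..Suc N. 1 / (real r * (real r + 1))) = (1 - 1 / (real N + 1)) + 1 / ((real N + 1) * (real N + 2))"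
    using Suc by (simp add: add.commute)
  also have "\<dots> = 1 - 1 / (real (Suc N) + 1)"
  proof -
    have x: "real N + 1 > 0" by simp
    have g: "(1 - 1 / x) + 1 / (x * (x + 1)) = 1 - 1 / (x + 1)" if xp: "x > 0" for x :: real
    proof -
      have "x + x * x > 0" using xp by (simp add: add_pos_pos)
      then show ?thesis using xp by (simp add: field_simps)
    qed
    show ?thesis using g[OF x] by (simp add: add.assoc)
  qed
  finally show ?case .
qed


lemma qlog:
  assumes "r \<ge> (1::nat)"
  shows "- log 2 (1 / (real r * (real r + 1))) \<le> 2 * log 2 (real r) + 1"
proof -
  have r: "real r > 0" "real r + 1 > 0" using assms by auto
  have "- log 2 (1 / (real r * (real r + 1))) = log 2 (real r) + log 2 (real r + 1)"
    using r by (simp add: log_divide log_mult)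
  also have "log 2 (real r + 1) \<le> log 2 (2 * real r)"
    using r assms by (subst log_le_cancel_iff) auto
  also have "log 2 (2 * real r) = 1 + log 2 (real r)" using r by (simp add: log_mult)
  finally show ?thesis by simp
qed

theorem mainTheorem1:
  shows "\<exists>C::real. \<forall>(p::nat pmf) (\<alpha>::nat \<Rightarrow> nat) (\<beta>::nat \<Rightarrow> nat).
           finite (set_pmf p) \<longrightarrow>
           (\<exists>\<gamma>::nat \<Rightarrow> nat.
              cond_shannon_entropy p \<alpha> (\<lambda>\<omega>. (\<beta> \<omega>, \<gamma> \<omega>)) = 0 \<and>
              shannon_entropy p \<gamma> \<le> 2 * cond_shannon_entropy p \<alpha> \<beta> + C)"
proof (intro exI[of _ 1] allI impI)
  fix p :: "nat pmf" and \<alpha> \<beta> :: "nat \<Rightarrow> nat"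
  assume fin: "finite (set_pmf p)"
  define f where "f = (\<lambda>a b. PX p (\<lambda>\<omega>. (\<alpha> \<omega>, \<beta> \<omega>)) (a, b))"
  define T where "T = (\<lambda>b. \<alpha> ` {\<omega>\<in>set_pmf p. \<beta> \<omega> = b})"
  define rk where "rk = (\<lambda>a b. card {x\<in>T b. f a b < f x b \<or> (f x b = f a b \<and> x \<le> a)})"
  define \<gamma> where "\<gamma> = (\<lambda>\<omega>. rk (\<alpha> \<omega>) (\<beta> \<omega>))"
  have finT: "finite (T b)" for b using fin by (simp add: T_def)
  have fnn: "f x b \<ge> 0" for x b unfolding f_def PX_def by (simp add: sum_nonneg)
  have sumT: "sum (\<lambda>x. f x b) (T b) = PX p \<beta> b" for b
  proof -
    have "PX p \<beta> b = sum (pmf p) {\<omega>\<in>set_pmf p. \<beta> \<omega> = b}" by (simp add: PX_def)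
    also have "\<dots> = (\<Sum>x\<in>\<alpha> ` {\<omega>\<in>set_pmf p. \<beta> \<omega> = b}.
                  sum (pmf p) {\<omega>. \<omega> \<in> {\<omega>\<in>set_pmf p. \<beta> \<omega> = b} \<and> \<alpha> \<omega> = x})"
      by (rule sum.image_gen) (use fin in simp)
    also have "\<dots> = sum (\<lambda>x. f x b) (T b)" unfolding T_def f_def PX_def
      by (intro sum.cong refl arg_cong2[where f=sum]) auto
    finally show ?thesis by simp
  qed
  have inj: "\<alpha> \<omega> = \<alpha> \<omega>'" if "\<omega> \<in> set_pmf p" "\<omega>' \<in> set_pmf p" "\<beta> \<omega> = \<beta> \<omega>'" "\<gamma> \<omega> = \<gamma> \<omega>'" for \<omega> \<omega>'
  proof -
    have "\<alpha> \<omega> \<in> T (\<beta> \<omega>)" "\<alpha> \<omega>' \<in> T (\<beta> \<omega>)" using that by (auto simp: T_def)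
    moreover have "rk (\<alpha> \<omega>) (\<beta> \<omega>) = rk (\<alpha> \<omega>') (\<beta> \<omega>)" using that unfolding \<gamma>_def by simp
    ultimately show ?thesis using RK_inj[OF finT, of "\<alpha> \<omega>" "\<beta> \<omega>" "\<alpha> \<omega>'" "\<lambda>x. f x (\<beta> \<omega>)"]
      unfolding rk_def by blast
  qed
  have rk1: "\<gamma> \<omega> \<ge> 1" and rkb: "real (\<gamma> \<omega>) * f (\<alpha> \<omega>) (\<beta> \<omega>) \<le> PX p \<beta> (\<beta> \<omega>)"
    if \<omega>: "\<omega> \<in> set_pmf p" for \<omega>
  proof -
    have a: "\<alpha> \<omega> \<in> T (\<beta> \<omega>)" using \<omega> by (auto simp: T_def)
    show "\<gamma> \<omega> \<ge> 1" unfolding \<gamma>_def rk_def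
      by (rule RK_bound(2)[OF finT a]) (rule fnn)
    show "real (\<gamma> \<omega>) * f (\<alpha> \<omega>) (\<beta> \<omega>) \<le> PX p \<beta> (\<beta> \<omega>)"
      unfolding \<gamma>_def rk_def sumT[symmetric]
      by (rule RK_bound(1)[OF finT a]) (rule fnn)
  qed
  have fpos: "f (\<alpha> \<omega>) (\<beta> \<omega>) > 0" if "\<omega> \<in> set_pmf p" for \<omega>
    unfolding f_def using PX_pos[OF fin that, of "\<lambda>\<omega>. (\<alpha> \<omega>, \<beta> \<omega>)"] by simp
  have logb: "log 2 (real (\<gamma> \<omega>)) \<le> - log 2 (f (\<alpha> \<omega>) (\<beta> \<omega>) / PX p \<beta> (\<beta> \<omega>))"
    if \<omega>: "\<omega> \<in> set_pmf p" for \<omega>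
  proof -
    have Y: "PX p \<beta> (\<beta> \<omega>) > 0" using PX_pos[OF fin \<omega>] .
    have F: "f (\<alpha> \<omega>) (\<beta> \<omega>) > 0" using fpos[OF \<omega>] .
    have g: "real (\<gamma> \<omega>) > 0" using rk1[OF \<omega>] by simp
    have "real (\<gamma> \<omega>) \<le> PX p \<beta> (\<beta> \<omega>) / f (\<alpha> \<omega>) (\<beta> \<omega>)"
      using rkb[OF \<omega>] F by (simp add: le_divide_eq)
    then have "log 2 (real (\<gamma> \<omega>)) \<le> log 2 (PX p \<beta> (\<beta> \<omega>) / f (\<alpha> \<omega>) (\<beta> \<omega>))"
      using g F Y by (subst log_le_cancel_iff) auto
    also have "\<dots> = - log 2 (f (\<alpha> \<omega>) (\<beta> \<omega>) / PX p \<beta> (\<beta> \<omega>))"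
      using F Y by (simp add: log_divide)
    finally show ?thesis .
  qed
  have main: "cond_shannon_entropy p \<alpha> (\<lambda>\<omega>. (\<beta> \<omega>, \<gamma> \<omega>)) = 0 \<and>
        shannon_entropy p \<gamma> \<le> 2 * cond_shannon_entropy p \<alpha> \<beta> + 1"
  proof
    show "cond_shannon_entropy p \<alpha> (\<lambda>\<omega>. (\<beta> \<omega>, \<gamma> \<omega>)) = 0"
      unfolding CE[OF fin]
    proof (intro sum.neutral ballI)
      fix \<omega> assume \<omega>: "\<omega> \<in> set_pmf p"
      have "{\<omega>'\<in>set_pmf p. (\<alpha> \<omega>', \<beta> \<omega>', \<gamma> \<omega>') = (\<alpha> \<omega>, \<beta> \<omega>, \<gamma> \<omega>)}
          = {\<omega>'\<in>set_pmf p. (\<beta> \<omega>', \<gamma> \<omega>') = (\<beta> \<omega>, \<gamma> \<omega>)}"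
        using inj[OF _ \<omega>] by auto
      then have e: "PX p (\<lambda>\<omega>. (\<alpha> \<omega>, \<beta> \<omega>, \<gamma> \<omega>)) (\<alpha> \<omega>, \<beta> \<omega>, \<gamma> \<omega>) = PX p (\<lambda>\<omega>. (\<beta> \<omega>, \<gamma> \<omega>)) (\<beta> \<omega>, \<gamma> \<omega>)"
        unfolding PX_def by simp
      have "PX p (\<lambda>\<omega>. (\<beta> \<omega>, \<gamma> \<omega>)) (\<beta> \<omega>, \<gamma> \<omega>) > 0"
        using PX_pos[OF fin \<omega>, of "\<lambda>\<omega>. (\<beta> \<omega>, \<gamma> \<omega>)"] by simp
      then show "pmf p \<omega> * - log 2 (PX p (\<lambda>\<omega>. (\<alpha> \<omega>, \<beta> \<omega>, \<gamma> \<omega>)) (\<alpha> \<omega>, \<beta> \<omega>, \<gamma> \<omega>) /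
                  PX p (\<lambda>\<omega>. (\<beta> \<omega>, \<gamma> \<omega>)) (\<beta> \<omega>, \<gamma> \<omega>)) = 0"
        by (simp add: e)
    qed
  next
    let ?R = "\<gamma> ` set_pmf p"
    define q where "q = (\<lambda>r::nat. 1 / (real r * (real r + 1)))"
    have finR: "finite ?R" using fin by simp
    have Ppos: "PX p \<gamma> r > 0" if "r \<in> ?R" for r
      using that PX_pos[OF fin, of _ \<gamma>] by auto
    have R1: "r \<ge> 1" if "r \<in> ?R" for r using that rk1 by auto
    have qpos: "q r > 0" if "r \<in> ?R" for r using R1[OF that] unfolding q_def by simp
    have sumP: "(\<Sum>r\<in>?R. PX p \<gamma> r) = 1"
      using G[OF fin, of \<gamma> "\<lambda>_. 1"] sum_pmf_eq_1[OF fin subset_refl] by simp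
    have sumq: "(\<Sum>r\<in>?R. q r) \<le> 1"
    proof -
      have "(\<Sum>r\<in>?R. q r) \<le> (\<Sum>r=1..Max ?R. q r)"
        using finR R1 Max_ge[OF finR] unfolding q_def
        by (intro sum_mono2) auto
      also have "\<dots> = 1 - 1 / (real (Max ?R) + 1)" unfolding q_def by (rule tele)
      also have "\<dots> \<le> 1" by simp
      finally show ?thesis .
    qed
    have "shannon_entropy p \<gamma> = (\<Sum>r\<in>?R. - (PX p \<gamma> r * log 2 (PX p \<gamma> r)))"
      unfolding shannon_entropy_def L0[OF fin] by (simp add: sum_negf)
    also have "\<dots> \<le> (\<Sum>r\<in>?R. PX p \<gamma> r * - log 2 (q r) + (q r - PX p \<gamma> r) / ln 2)"
      by (intro sum_mono gibbs1 Ppos qpos)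
    also have "\<dots> = (\<Sum>r\<in>?R. PX p \<gamma> r * - log 2 (q r)) + ((\<Sum>r\<in>?R. q r) - (\<Sum>r\<in>?R. PX p \<gamma> r)) / ln 2"
      by (simp add: sum.distrib sum_divide_distrib[symmetric] sum_subtractf sum_negf)
    also have "\<dots> \<le> (\<Sum>r\<in>?R. PX p \<gamma> r * - log 2 (q r))"
      using sumP sumq by (simp add: divide_nonpos_pos)
    also have "\<dots> = (\<Sum>\<omega>\<in>set_pmf p. pmf p \<omega> * - log 2 (q (\<gamma> \<omega>)))"
      by (rule G[OF fin])
    also have "\<dots> \<le> (\<Sum>\<omega>\<in>set_pmf p. pmf p \<omega> * (2 * log 2 (real (\<gamma> \<omega>)) + 1))"
      unfolding q_def by (intro sum_mono mult_left_mono qlog rk1) auto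
    also have "\<dots> = 2 * (\<Sum>\<omega>\<in>set_pmf p. pmf p \<omega> * log 2 (real (\<gamma> \<omega>))) + (\<Sum>\<omega>\<in>set_pmf p. pmf p \<omega>)"
      by (simp add: sum.distrib sum_distrib_left algebra_simps)
    also have "\<dots> = 2 * (\<Sum>\<omega>\<in>set_pmf p. pmf p \<omega> * log 2 (real (\<gamma> \<omega>))) + 1"
      using sum_pmf_eq_1[OF fin subset_refl] by simp
    also have "\<dots> \<le> 2 * (\<Sum>\<omega>\<in>set_pmf p. pmf p \<omega> * - log 2 (f (\<alpha> \<omega>) (\<beta> \<omega>) / PX p \<beta> (\<beta> \<omega>))) + 1"
      using logb by (intro add_right_mono mult_left_mono sum_mono) auto
    also have "\<dots> = 2 * cond_shannon_entropy p \<alpha> \<beta> + 1"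
      unfolding CE[OF fin] f_def by simp
    finally show "shannon_entropy p \<gamma> \<le> 2 * cond_shannon_entropy p \<alpha> \<beta> + 1" .
  qed
  then show "\<exists>\<gamma>::nat \<Rightarrow> nat.
              cond_shannon_entropy p \<alpha> (\<lambda>\<omega>. (\<beta> \<omega>, \<gamma> \<omega>)) = 0 \<and>
              shannon_entropy p \<gamma> \<le> 2 * cond_shannon_entropy p \<alpha> \<beta> + 1" by blast
qed

end
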